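(* Let $n,k,s$ be positive integers with $2\le s\le\lfloor n/k\rfloor$, let $d=\lfloor n/s\rfloor$ (so $d\ge k$), and let $M>0$. For $i\in[0:\lfloor k/2\rfloor]$ define $$f(i)=\begin{cases}\dfrac{Md}{(2k-i-1)i+k(d-k+1)} & 0\le i<\lfloor k/2\rfloor,\\[2mm] \dfrac{Md}{kd-\lfloor k/2\rfloor\lceil k/2\rceil} & i=\lfloor k/2\rfloor.\end{cases}$$ For a repair bandwidth $\gamma=d\beta$ with $\gamma\ge f(\lfloor k/2\rfloor)$, let $\alpha^*(\gamma)$ be the smallest storage $\alpha$ such that, in every information flow graph of the FCRS with parameters $(n,k,s)$, storage $\alpha$ and per-helper download $\beta=\gamma/d$, every data collector has min-cut (to the source) at least $M$. Then $$\alpha^*(\gamma)=\begin{cases}\dfrac{M}{k} & \text{if } \gamma\in[f(0),\infty),\\[2mm] \dfrac{M-\frac{i}{d}(d-k+i)\gamma}{k-i} & \text{if } \gamma\in[f(i),f(i-1)) \text{ for some } i\in[1:\lfloor k/2\rfloor].\end{cases}$$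
   Context: Notation: $[a]=\{1,\dots,a\}$, $[a:b]=\{a,a+1,\dots,b\}$. Fixed Cluster Repair System (FCRS) with parameters $(n,k,s)$: $n=ds+s_0$ servers with $d=\lfloor n/s\rfloor$, $s_0=n \bmod s$, partitioned into clusters $1,\dots,s$ of size $d$ and a cluster $s+1$ of size $s_0$; server $j$ of cluster $i$ is indexed $(i,j)$. A file of size $M$ is stored; each server stores at most $\alpha$ units. Time is slotted; at the end of each time slot exactly one server $(r,\ell)$ fails and is replaced by a newcomer, which chooses an arbitrary repair cluster $i\in[s]$ with $i\neq r$ (cluster $s+1$ never serves as a repair group) and downloads $\beta$ units from each of the $d$ servers of cluster $i$; the repair bandwidth is $\gamma=d\beta$. Under functional repair, any $k$ servers (from any clusters) must be able to recover the file at all times. Information flow graph: a source node; for every server $(i,j)$ and time $t\ge0$ an in-node and an out-node joined by an edge of capacity $\alpha$; at $t=0$ the source connects to every in-node with infinite capacity. If server $(r,\ell)$ fails at the end of slot $t-1$ and is repaired by cluster $i$, there are edges of capacity $\beta$ from the out-nodes at time $t-1$ of all $d$ servers of cluster $i$ to the in-node of $(r,\ell)$ at time $t$; every other server has an infinite-capacity edge from its out-node at time $t-1$ to its in-node at time $t$. A data collector at time $t$ is a node connected by infinite-capacity edges from the time-$t$ out-nodes of some $k$ distinct servers. The graph depends on the (arbitrary, finite) sequence of failures and choices of repair clusters. (The min-cut condition is the feasibility criterion for functional repair, achievable e.g. by random linear network codes.) *)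

theory Defs
  imports "HOL-Library.Extended_Nonnegative_Real"
begin

text \<open>Fixed Cluster Repair System (FCRS) with parameters (n,k,s).
  A server is a pair (i,j) (cluster i, index j).\<close>

definition fcrs_d :: "nat \<Rightarrow> nat \<Rightarrow> nat" where
  "fcrs_d n s = n div s"

definition fcrs_s0 :: "nat \<Rightarrow> nat \<Rightarrow> nat" where
  "fcrs_s0 n s = n mod s"

definition servers :: "nat \<Rightarrow> nat \<Rightarrow> (nat \<times> nat) set" where
  "servers n s =
     {(i, j). (1 \<le> i \<and> i \<le> s \<and> 1 \<le> j \<and> j \<le> fcrs_d n s)
            \<or> (i = s + 1 \<and> 1 \<le> j \<and> j \<le> fcrs_s0 n s)}"

text \<open>A failure/repair event (r, l, i): server (r,l) fails and is repaired
  by downloading from all d servers of cluster i.  A failure sequence is a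
  list of such events; the event fs ! t happens at the end of slot t, so the
  newcomer's in-node lives at time t+1.\<close>

definition valid_event :: "nat \<Rightarrow> nat \<Rightarrow> nat \<times> nat \<times> nat \<Rightarrow> bool" where
  "valid_event n s e = (case e of (r, l, i) \<Rightarrow>
      (r, l) \<in> servers n s \<and> 1 \<le> i \<and> i \<le> s \<and> i \<noteq> r)"

definition valid_seq :: "nat \<Rightarrow> nat \<Rightarrow> (nat \<times> nat \<times> nat) list \<Rightarrow> bool" where
  "valid_seq n s fs = (\<forall>e \<in> set fs. valid_event n s e)"

datatype ifg_node = Src | In "nat \<times> nat" nat | Out "nat \<times> nat" nat | DC

definition ifg_nodes :: "nat \<Rightarrow> nat \<Rightarrow> (nat \<times> nat \<times> nat) list \<Rightarrow> ifg_node set" where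
  "ifg_nodes n s fs =
     {Src, DC} \<union> {In x t | x t. x \<in> servers n s \<and> t \<le> length fs}
               \<union> {Out x t | x t. x \<in> servers n s \<and> t \<le> length fs}"

text \<open>Edge capacities (0 = no edge).  Parameters: alpha (storage), beta
  (per-helper download), K (servers the collector connects to), tc (time of
  the collector).\<close>

fun ifg_cap :: "nat \<Rightarrow> nat \<Rightarrow> (nat \<times> nat \<times> nat) list \<Rightarrow> real \<Rightarrow> real \<Rightarrow>
    (nat \<times> nat) set \<Rightarrow> nat \<Rightarrow> ifg_node \<Rightarrow> ifg_node \<Rightarrow> ennreal" where
  "ifg_cap n s fs \<alpha> \<beta> K tc Src (In x t) =
     (if x \<in> servers n s \<and> t = 0 then \<infinity> else 0)"
| "ifg_cap n s fs \<alpha> \<beta> K tc (In x t) (Out y t') =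
     (if x = y \<and> t = t' \<and> x \<in> servers n s \<and> t \<le> length fs then ennreal \<alpha> else 0)"
| "ifg_cap n s fs \<alpha> \<beta> K tc (Out y t') (In x t) =
     (if x \<in> servers n s \<and> y \<in> servers n s \<and> 1 \<le> t \<and> t \<le> length fs \<and> t' = t - 1 then
        (case fs ! (t - 1) of (r, l, i) \<Rightarrow>
           if x = (r, l) then (if fst y = i then ennreal \<beta> else 0)
           else (if y = x then \<infinity> else 0))
      else 0)"
| "ifg_cap n s fs \<alpha> \<beta> K tc (Out x t) DC =
     (if x \<in> K \<and> t = tc then \<infinity> else 0)"
| "ifg_cap n s fs \<alpha> \<beta> K tc _ _ = 0"

definition cut_value :: "nat \<Rightarrow> nat \<Rightarrow> (nat \<times> nat \<times> nat) list \<Rightarrow> real \<Rightarrow> real \<Rightarrow>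
    (nat \<times> nat) set \<Rightarrow> nat \<Rightarrow> ifg_node set \<Rightarrow> ennreal" where
  "cut_value n s fs \<alpha> \<beta> K tc S =
     (\<Sum>u \<in> S. \<Sum>v \<in> ifg_nodes n s fs - S. ifg_cap n s fs \<alpha> \<beta> K tc u v)"

definition min_cut :: "nat \<Rightarrow> nat \<Rightarrow> (nat \<times> nat \<times> nat) list \<Rightarrow> real \<Rightarrow> real \<Rightarrow>
    (nat \<times> nat) set \<Rightarrow> nat \<Rightarrow> ennreal" where
  "min_cut n s fs \<alpha> \<beta> K tc =
     (INF S \<in> {S. S \<subseteq> ifg_nodes n s fs \<and> Src \<in> S \<and> DC \<notin> S}.
        cut_value n s fs \<alpha> \<beta> K tc S)"

definition is_smallest :: "real set \<Rightarrow> real \<Rightarrow> bool" where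
  "is_smallest A x = (x \<in> A \<and> (\<forall>y \<in> A. x \<le> y))"

definition fcrs_feasible :: "nat \<Rightarrow> nat \<Rightarrow> nat \<Rightarrow> real \<Rightarrow> real \<Rightarrow> real \<Rightarrow> bool" where
  "fcrs_feasible n k s M \<alpha> \<beta> =
     (\<forall>fs K tc. valid_seq n s fs \<longrightarrow> tc \<le> length fs \<longrightarrow>
        K \<subseteq> servers n s \<longrightarrow> card K = k \<longrightarrow>
        ennreal M \<le> min_cut n s fs \<alpha> \<beta> K tc)"

definition fcrs_f :: "nat \<Rightarrow> nat \<Rightarrow> nat \<Rightarrow> real \<Rightarrow> nat \<Rightarrow> real" where
  "fcrs_f n k s M i =
     (let d = real (fcrs_d n s) in
      if i < k div 2 then
        M * d / ((2 * real k - real i - 1) * real i + real k * (d - real k + 1))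
      else
        M * d / (real k * d - real (k div 2) * real ((k + 1) div 2)))"

end

theory Submission
  imports Defs
begin


definition cntc :: "nat \<Rightarrow> (nat \<times> nat) list \<Rightarrow> nat" where
  "cntc X L = length (filter (\<lambda>r. fst r = X) L)"

inductive validL :: "(nat \<times> nat) list \<Rightarrow> bool" where
  vNil: "validL []"
| vSnoc: "validL L \<Longrightarrow> (c = 0 \<or> (\<exists>X. X \<noteq> Y \<and> c \<le> cntc X L)) \<Longrightarrow> validL (L @ [(Y, c)])"

lemma validL_butlast: "validL (L @ [r]) \<Longrightarrow> validL L"
  by (cases rule: validL.cases) auto

lemma validL_prefix: "validL (L1 @ L2) \<Longrightarrow> validL L1"
proof (induction L2 rule: rev_induct)
  case Nil then show ?case by simp
next
  case (snoc x xs)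
  then show ?case using validL_butlast[of "L1 @ xs" x] by simp
qed

lemma validL_take: "validL L \<Longrightarrow> validL (take k L)"
  using validL_prefix[of "take k L" "drop k L"] by simp

lemma cntc_snoc: "cntc X (L @ [r]) = cntc X L + (if fst r = X then 1 else 0)"
  by (simp add: cntc_def)

lemma cntc_two: "X \<noteq> Y \<Longrightarrow> cntc X L + cntc Y L \<le> length L"
  by (induction L) (auto simp: cntc_def)

lemma cntc_le: "cntc X L \<le> length L"
  by (simp add: cntc_def)

definition tsum :: "(nat \<times> nat \<Rightarrow> bool) \<Rightarrow> (nat \<times> nat) list \<Rightarrow> nat" where
  "tsum P L = sum_list (map (\<lambda>r. if P r then snd r else 0) L)"

definition tcnt :: "(nat \<times> nat \<Rightarrow> bool) \<Rightarrow> (nat \<times> nat) list \<Rightarrow> nat" where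
  "tcnt P L = length (filter P L)"

lemma comb_inv:
  assumes "validL L"
  shows "\<exists>m. (\<forall>X. cntc X L \<le> m) \<and> m \<le> length L \<and> tsum P L \<le> tcnt P L * m
             \<and> tsum P L \<le> m * (length L - m)"
  using assms
proof (induction rule: validL.induct)
  case vNil
  then show ?case by (auto simp: cntc_def tsum_def tcnt_def)
next
  case (vSnoc L c Y)
  from vSnoc.IH obtain m where m1: "\<forall>X. cntc X L \<le> m" and m2: "m \<le> length L"
    and m3: "tsum P L \<le> tcnt P L * m" and m4: "tsum P L \<le> m * (length L - m)" by blast
  have ts: "tsum P (L @ [(Y,c)]) = tsum P L + (if P (Y,c) then c else 0)"
    by (simp add: tsum_def)
  have tc: "tcnt P (L @ [(Y,c)]) = tcnt P L + (if P (Y,c) then 1 else 0)"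
    by (simp add: tcnt_def)
  have cm: "c \<le> m" using vSnoc.hyps(2) m1 by (meson le_trans zero_le)
  show ?case
  proof (cases "cntc Y L < m")
    case True
    have "\<forall>X. cntc X (L @ [(Y,c)]) \<le> m" using m1 True by (auto simp: cntc_snoc)
    moreover have "m \<le> length (L @ [(Y,c)])" using m2 by simp
    moreover have "tsum P (L @ [(Y,c)]) \<le> tcnt P (L @ [(Y,c)]) * m"
      using m3 cm ts tc by (auto simp: algebra_simps)
    moreover have "tsum P (L @ [(Y,c)]) \<le> m * (length (L @ [(Y,c)]) - m)"
    proof -
      have "m * (length (L @ [(Y,c)]) - m) = m * (length L - m) + m" using m2
        by (simp add: Suc_diff_le)
      then show ?thesis using m4 cm ts by auto
    qed
    ultimately show ?thesis by blast
  next
    case False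
    then have eq: "cntc Y L = m" using m1 by (meson le_neq_implies_less)
    have cpm: "c \<le> length L - m"
    proof (cases "c = 0")
      case False
      then obtain X where "X \<noteq> Y" "c \<le> cntc X L" using vSnoc.hyps(2) by blast
      then show ?thesis using cntc_two[of X Y L] eq by linarith
    qed simp
    have "\<forall>X. cntc X (L @ [(Y,c)]) \<le> Suc m" using m1 by (auto simp: cntc_snoc intro: le_SucI)
    moreover have "Suc m \<le> length (L @ [(Y,c)])" using m2 by simp
    moreover have "tsum P (L @ [(Y,c)]) \<le> tcnt P (L @ [(Y,c)]) * Suc m"
      using m3 cm ts tc by (auto simp: algebra_simps)
    moreover have "tsum P (L @ [(Y,c)]) \<le> Suc m * (length (L @ [(Y,c)]) - Suc m)"
    proof -
      have "Suc m * (length (L @ [(Y,c)]) - Suc m) = m * (length L - m) + (length L - m)"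
        by simp
      then show ?thesis using m4 cpm ts by auto
    qed
    ultimately show ?thesis by blast
  qed
qed

lemma comb_final:
  assumes "validL L"
  shows "\<exists>x. x \<le> tcnt P L \<and> tsum P L \<le> x * (length L - x)"
proof -
  obtain m where m1: "\<forall>X. cntc X L \<le> m" and m2: "m \<le> length L"
    and m3: "tsum P L \<le> tcnt P L * m" and m4: "tsum P L \<le> m * (length L - m)"
    using comb_inv[OF assms, of P] by blast
  let ?t = "tcnt P L" and ?k = "length L"
  have tk: "?t \<le> ?k" by (simp add: tcnt_def)
  show ?thesis
  proof (cases "m \<le> ?t")
    case True then show ?thesis using m4 by blast
  next
    case False
    show ?thesis
    proof (cases "?k - ?t \<le> m")
      case True
      have "?k - m \<le> ?t" using True by linarith
      moreover have "m * (?k - m) = (?k - m) * (?k - (?k - m))" using m2 by simp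
      ultimately show ?thesis using m4 by metis
    next
      case F2: False
      have "?t * m \<le> ?t * (?k - ?t)" using F2 by simp
      then show ?thesis using m3 by (meson le_trans order_refl)
    qed
  qed
qed




lemma sum_min_eq:
  assumes "\<forall>r\<in>set L. snd r \<le> d"
  shows "sum_list (map (\<lambda>r. min \<alpha> (real (d - snd r) * \<beta>)) L)
    = \<alpha> * (real (length L) - real (tcnt (\<lambda>r. real (d - snd r) * \<beta> < \<alpha>) L))
      + \<beta> * (real d * real (tcnt (\<lambda>r. real (d - snd r) * \<beta> < \<alpha>) L)
               - real (tsum (\<lambda>r. real (d - snd r) * \<beta> < \<alpha>) L))"
  using assms
proof (induction L)
  case Nil then show ?case by (simp add: tcnt_def tsum_def)
next
  case (Cons r L)
  then have rd: "snd r \<le> d" by simp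
  show ?case
    using Cons rd by (auto simp: tcnt_def tsum_def min_def of_nat_diff algebra_simps)
qed

lemma real_bound:
  fixes \<alpha> \<beta> M :: real
  assumes "validL L" "length L = k" "\<forall>r\<in>set L. snd r \<le> d"
    and "0 \<le> \<beta>" "\<alpha> \<le> real d * \<beta>"
    and hyp: "\<forall>u \<le> k div 2. M \<le> (real k - real u) * \<alpha> + real u * (real d - real k + real u) * \<beta>"
  shows "M \<le> sum_list (map (\<lambda>r. min \<alpha> (real (d - snd r) * \<beta>)) L)"
proof -
  let ?P = "\<lambda>r. real (d - snd r) * \<beta> < \<alpha>"
  define t where "t = tcnt ?P L"
  define ts where "ts = tsum ?P L"
  have tk: "t \<le> k" using assms(2) length_filter_le by (metis t_def tcnt_def)
  obtain x where x1: "x \<le> t" and x2: "ts \<le> x * (k - x)"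
    using comb_final[OF assms(1), of ?P] assms(2) by (auto simp: t_def ts_def)
  have xk: "x \<le> k" using x1 tk by simp
  obtain u where u1: "u \<le> k div 2" and u2: "u \<le> t" and u3: "u * (k - u) = x * (k - x)"
  proof (cases "x \<le> k div 2")
    case True then show ?thesis using that x1 by blast
  next
    case False
    have "k - x \<le> k div 2" using False by linarith
    moreover have "k - x \<le> t" using False x1 by linarith
    moreover have "(k - x) * (k - (k - x)) = x * (k - x)" using xk by simp
    ultimately show ?thesis using that by blast
  qed
  have uk: "u \<le> k" using u1 by linarith
  have eqs: "sum_list (map (\<lambda>r. min \<alpha> (real (d - snd r) * \<beta>)) L)
     = \<alpha> * (real k - real t) + \<beta> * (real d * real t - real ts)"
    using sum_min_eq[OF assms(3), of \<alpha> \<beta>] assms(2) by (simp add: t_def ts_def)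
  have tsr: "real ts \<le> real u * (real k - real u)"
  proof -
    have "ts \<le> u * (k - u)" using x2 u3 by simp
    then have "real ts \<le> real (u * (k - u))" by linarith
    then show ?thesis using uk by (simp add: of_nat_diff)
  qed
  have A: "(real t - real u) * (real d * \<beta> - \<alpha>) \<ge> 0"
    using u2 assms(5) by (intro mult_nonneg_nonneg) auto
  have "M \<le> (real k - real u) * \<alpha> + real u * (real d - real k + real u) * \<beta>"
    using hyp u1 by blast
  also have "\<dots> \<le> \<alpha> * (real k - real t) + \<beta> * (real d * real t - real u * (real k - real u))"
    using A by (simp add: algebra_simps)
  also have "\<dots> \<le> \<alpha> * (real k - real t) + \<beta> * (real d * real t - real ts)"
    using tsr assms(4) by (simp add: mult_left_mono)
  finally show ?thesis using eqs by simp
qed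




definition clus :: "nat \<Rightarrow> nat \<Rightarrow> (nat \<times> nat) set" where
  "clus d i = {i} \<times> {1..d}"

lemma card_clus[simp]: "card (clus d i) = d" by (simp add: clus_def card_cartesian_product)
lemma finite_clus[simp]: "finite (clus d i)" by (simp add: clus_def)

lemma servers_sub: "servers n s \<subseteq> {0..s+1} \<times> {0..fcrs_d n s + fcrs_s0 n s}"
  by (auto simp: servers_def)

lemma finite_servers[simp]: "finite (servers n s)"
  using servers_sub finite_subset by blast

lemma clus_servers: "1 \<le> i \<Longrightarrow> i \<le> s \<Longrightarrow> {y \<in> servers n s. fst y = i} = clus (fcrs_d n s) i"
  by (auto simp: servers_def clus_def)

lemma ifg_nodes_eq: "ifg_nodes n s fs = {Src, DC} \<union> (\<lambda>(x,t). In x t) ` (servers n s \<times> {..length fs})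
    \<union> (\<lambda>(x,t). Out x t) ` (servers n s \<times> {..length fs})"
  by (auto simp: ifg_nodes_def image_iff)

lemma finite_nodes[simp]: "finite (ifg_nodes n s fs)"
  unfolding ifg_nodes_eq by auto

lemma In_node: "x \<in> servers n s \<Longrightarrow> t \<le> length fs \<Longrightarrow> In x t \<in> ifg_nodes n s fs"
  by (cases x) (auto simp: ifg_nodes_def)
lemma Out_node: "x \<in> servers n s \<Longrightarrow> t \<le> length fs \<Longrightarrow> Out x t \<in> ifg_nodes n s fs"
  by (cases x) (auto simp: ifg_nodes_def)
lemma DC_node: "DC \<in> ifg_nodes n s fs" by (simp add: ifg_nodes_def)

lemma validL_app0: "validL L \<Longrightarrow> validL (L @ map (\<lambda>x. (f x, 0)) xs)"
proof (induction xs rule: rev_induct)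
  case Nil then show ?case by simp
next
  case (snoc x xs)
  then have "validL ((L @ map (\<lambda>x. (f x, 0)) xs) @ [(f x, 0)])" by (intro vSnoc) auto
  then show ?case by simp
qed

lemma cntc_append: "cntc X (L @ R) = cntc X L + cntc X R" by (simp add: cntc_def)

lemma add_alpha:
  fixes A :: "(nat \<times> nat) set"
  assumes "finite A" "validL L"
  shows "\<exists>R. validL (L @ R) \<and> (\<forall>r\<in>set R. snd r = 0) \<and> length R = card A
            \<and> (\<forall>X. cntc X R = card {x \<in> A. fst x = X})"
proof -
  obtain xs0 where xs0: "set xs0 = A" "distinct xs0" using finite_distinct_list[OF assms(1)] by blast
  let ?xs = "xs0"
  let ?R = "map (\<lambda>x. (fst x, 0::nat)) ?xs"
  have "validL (L @ ?R)" using validL_app0[OF assms(2)] by blast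
  moreover have "\<forall>X. cntc X ?R = card {x \<in> A. fst x = X}"
  proof
    fix X
    have "cntc X ?R = length (filter (\<lambda>x. fst x = X) ?xs)"
      by (simp add: cntc_def filter_map o_def)
    also have "\<dots> = card (set (filter (\<lambda>x. fst x = X) ?xs))"
      using xs0 by (metis distinct_card distinct_filter)
    also have "\<dots> = card {x \<in> A. fst x = X}" using xs0 by (simp add: set_filter)
    finally show "cntc X ?R = card {x \<in> A. fst x = X}" .
  qed
  ultimately show ?thesis using xs0 by (intro exI[of _ ?R]) (auto simp: distinct_card)
qed

lemma sum_list_R:
  assumes "\<forall>r\<in>set R. snd r = 0" "0 \<le> \<beta>"
  shows "sum_list (map (\<lambda>r. min \<alpha> (real (d - snd r) * \<beta>)) R) \<le> \<alpha> * real (length R)"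
  using assms by (induction R) (auto simp: algebra_simps)




context
  fixes n s :: nat and fs :: "(nat \<times> nat \<times> nat) list" and \<alpha> \<beta> :: real
    and K :: "(nat \<times> nat) set" and tc :: nat and S :: "ifg_node set"
  assumes vs: "valid_seq n s fs" and tcl: "tc \<le> length fs" and Ksub: "K \<subseteq> servers n s"
    and Ssub: "S \<subseteq> ifg_nodes n s fs" and src: "Src \<in> S" and dc: "DC \<notin> S"
    and a0: "0 \<le> \<alpha>" and b0: "0 \<le> \<beta>"
    and fin: "cut_value n s fs \<alpha> \<beta> K tc S \<noteq> top"
begin

lemma finS: "finite S" using Ssub finite_subset finite_nodes by blast

lemma noinf:
  assumes "u \<in> S" "v \<in> ifg_nodes n s fs" "v \<notin> S"
  shows "ifg_cap n s fs \<alpha> \<beta> K tc u v \<noteq> top"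
proof
  assume h: "ifg_cap n s fs \<alpha> \<beta> K tc u v = top"
  have "(\<Sum>v\<in>ifg_nodes n s fs - S. ifg_cap n s fs \<alpha> \<beta> K tc u v) = top"
    using h assms by (subst ennreal_sum_eq_top) auto
  then have "cut_value n s fs \<alpha> \<beta> K tc S = top"
    unfolding cut_value_def using assms(1) finS by (subst ennreal_sum_eq_top) auto
  then show False using fin by simp
qed

lemma F1: "x \<in> K \<Longrightarrow> Out x tc \<notin> S"
  using noinf[of "Out x tc" DC] dc DC_node Ksub by auto

lemma F2: "x \<in> servers n s \<Longrightarrow> In x 0 \<in> S"
  using noinf[of Src "In x 0"] src In_node[of x n s 0 fs] by auto

lemma ev_valid: "t < length fs \<Longrightarrow> fs ! t = (r, l, i) \<Longrightarrow>
    (r, l) \<in> servers n s \<and> 1 \<le> i \<and> i \<le> s \<and> i \<noteq> r"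
  using vs unfolding valid_seq_def valid_event_def by (metis (mono_tags, lifting) case_prod_conv nth_mem)

lemma F3:
  assumes "x \<in> servers n s" "t < length fs" "fs ! t = (r, l, i)" "x \<noteq> (r, l)"
    "In x (Suc t) \<notin> S"
  shows "Out x t \<notin> S"
proof
  assume h: "Out x t \<in> S"
  have "ifg_cap n s fs \<alpha> \<beta> K tc (Out x t) (In x (Suc t)) = top"
    using assms by simp
  then show False using noinf[OF h In_node[of x n s "Suc t" fs]] assms by simp
qed

definition "Oset t = {x \<in> servers n s. Out x t \<notin> S}"
definition "Aset t = {x \<in> servers n s. Out x t \<notin> S \<and> In x t \<in> S}"
definition "wn t = (fst (fs ! (t - 1)), fst (snd (fs ! (t - 1))))"
definition "hc t = snd (snd (fs ! (t - 1)))"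
definition "Bev t = (In (wn t) t \<notin> S)"
definition "Bset t = {t' \<in> {1..t}. Bev t'}"
definition "cval t = card {y \<in> clus (fcrs_d n s) (hc t). Out y (t - 1) \<notin> S}"

lemma finite_Aset[simp]: "finite (Aset t)" by (simp add: Aset_def)
lemma finite_Oset[simp]: "finite (Oset t)" by (simp add: Oset_def)

abbreviation "val L \<equiv> sum_list (map (\<lambda>r. min \<alpha> (real (fcrs_d n s - snd r) * \<beta>)) L)"

lemma inv:
  "t \<le> tc \<Longrightarrow> \<exists>L. validL L \<and> (\<forall>r\<in>set L. snd r \<le> fcrs_d n s)
     \<and> (\<forall>X. card {x \<in> Oset t. fst x = X} \<le> cntc X L) \<and> card (Oset t) \<le> length L
     \<and> val L \<le> \<alpha> * real (\<Sum>t'\<le>t. card (Aset t')) + (\<Sum>t'\<in>Bset t. real (fcrs_d n s - cval t') * \<beta>)"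
proof (induction t)
  case 0
  obtain R where R: "validL ([] @ R)" "\<forall>r\<in>set R. snd r = 0" "length R = card (Aset 0)"
    "\<forall>X. cntc X R = card {x \<in> Aset 0. fst x = X}"
    using add_alpha[OF finite_Aset vNil] by blast
  have sub: "Oset 0 \<subseteq> Aset 0" using F2 by (auto simp: Oset_def Aset_def)
  have c1: "\<forall>X. card {x \<in> Oset 0. fst x = X} \<le> cntc X R"
  proof
    fix X
    have "{x \<in> Oset 0. fst x = X} \<subseteq> {x \<in> Aset 0. fst x = X}" using sub by auto
    then show "card {x \<in> Oset 0. fst x = X} \<le> cntc X R" using R(4)
      by (simp add: card_mono)
  qed
  have c2: "card (Oset 0) \<le> length R" using R(3) card_mono[OF finite_Aset sub] by simp
  have v: "val R \<le> \<alpha> * real (length R)" using sum_list_R[OF R(2) b0] by blast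
  have b: "Bset 0 = {}" by (simp add: Bset_def)
  have v2: "val R \<le> \<alpha> * real (\<Sum>t'\<le>0. card (Aset t')) + (\<Sum>t'\<in>Bset 0. real (fcrs_d n s - cval t') * \<beta>)"
    using v b R(3) by simp
  have s2: "\<forall>r\<in>set R. snd r \<le> fcrs_d n s" using R(2) by simp
  show ?case using R(1) s2 c1 c2 v2 by (intro exI[of _ R] conjI) simp_all
next
  case (Suc t)
  then obtain L where L1: "validL L" and L2: "\<forall>r\<in>set L. snd r \<le> fcrs_d n s"
    and L3: "\<forall>X. card {x \<in> Oset t. fst x = X} \<le> cntc X L" and L4: "card (Oset t) \<le> length L"
    and L5: "val L \<le> \<alpha> * real (\<Sum>t'\<le>t. card (Aset t')) + (\<Sum>t'\<in>Bset t. real (fcrs_d n s - cval t') * \<beta>)"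
    by auto
  have tl: "t < length fs" using Suc.prems tcl by simp
  obtain r l i where ev: "fs ! t = (r, l, i)" by (metis prod.exhaust)
  have evv: "(r, l) \<in> servers n s" "1 \<le> i" "i \<le> s" "i \<noteq> r" using ev_valid[OF tl ev] by auto
  have wn: "wn (Suc t) = (r, l)" and hc: "hc (Suc t) = i" using ev by (auto simp: wn_def hc_def)
  define cv where "cv = cval (Suc t)"
  have cveq: "{y \<in> clus (fcrs_d n s) i. Out y t \<notin> S} = {x \<in> Oset t. fst x = i}"
    using clus_servers[OF evv(2) evv(3), of n] by (auto simp: Oset_def)
  have cv1: "cv = card {x \<in> Oset t. fst x = i}" using cveq hc by (simp add: cv_def cval_def)
  have cvd: "cv \<le> fcrs_d n s"
  proof -
    have "cv = card {y \<in> clus (fcrs_d n s) i. Out y t \<notin> S}" using cveq cv1 by simp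
    also have "\<dots> \<le> card (clus (fcrs_d n s) i)" by (rule card_mono) auto
    finally show ?thesis by simp
  qed
  define L1' where "L1' = (if Bev (Suc t) then L @ [(r, cv)] else L)"
  have V1: "validL L1'"
  proof (cases "Bev (Suc t)")
    case True
    have "cv \<le> cntc i L" using cv1 L3 by simp
    then have "validL (L @ [(r, cv)])" using L1 evv(4) by (intro vSnoc) auto
    then show ?thesis using True by (simp add: L1'_def)
  qed (simp add: L1'_def L1)
  obtain R where R: "validL (L1' @ R)" "\<forall>r\<in>set R. snd r = 0" "length R = card (Aset (Suc t))"
    "\<forall>X. cntc X R = card {x \<in> Aset (Suc t). fst x = X}"
    using add_alpha[OF finite_Aset V1] by blast
  define L2 where "L2 = L1' @ R"
  have cnt1: "\<And>X. cntc X L1' = cntc X L + (if Bev (Suc t) \<and> r = X then 1 else 0)"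
    by (auto simp: L1'_def cntc_snoc)
  have len1: "length L1' = length L + (if Bev (Suc t) then 1 else 0)"
    by (simp add: L1'_def)
  have val1: "val L1' \<le> val L + (if Bev (Suc t) then real (fcrs_d n s - cv) * \<beta> else 0)"
    by (simp add: L1'_def)
  have subO: "\<And>X. {x \<in> Oset (Suc t). fst x = X} \<subseteq> {x \<in> Oset t. fst x = X}
      \<union> {x \<in> Aset (Suc t). fst x = X} \<union> (if Bev (Suc t) \<and> r = X then {(r, l)} else {})"
  proof
    fix X x assume x: "x \<in> {x \<in> Oset (Suc t). fst x = X}"
    then have xs: "x \<in> servers n s" "Out x (Suc t) \<notin> S" "fst x = X" by (auto simp: Oset_def)
    show "x \<in> {x \<in> Oset t. fst x = X} \<union> {x \<in> Aset (Suc t). fst x = X}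
       \<union> (if Bev (Suc t) \<and> r = X then {(r, l)} else {})"
    proof (cases "In x (Suc t) \<in> S")
      case True then show ?thesis using xs by (auto simp: Aset_def)
    next
      case False
      show ?thesis
      proof (cases "x = (r, l)")
        case True
        then have "Bev (Suc t)" using False wn by (simp add: Bev_def)
        then show ?thesis using True xs by auto
      next
        case F2: False
        have "Out x t \<notin> S" using F3[OF xs(1) tl ev F2 False] .
        then show ?thesis using xs by (auto simp: Oset_def)
      qed
    qed
  qed
  have cntL2: "\<forall>X. card {x \<in> Oset (Suc t). fst x = X} \<le> cntc X L2"
  proof
    fix X
    have "card {x \<in> Oset (Suc t). fst x = X} \<le> card ({x \<in> Oset t. fst x = X}
      \<union> {x \<in> Aset (Suc t). fst x = X} \<union> (if Bev (Suc t) \<and> r = X then {(r, l)} else {}))"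
      by (rule card_mono[OF _ subO]) auto
    also have "\<dots> \<le> card {x \<in> Oset t. fst x = X} + card {x \<in> Aset (Suc t). fst x = X}
       + card (if Bev (Suc t) \<and> r = X then {(r, l)} else {})"
      by (meson add_le_mono card_Un_le le_trans order_refl)
    also have "\<dots> \<le> cntc X L2"
      using L3 R(4) cnt1 by (auto simp: L2_def cntc_append)
    finally show "card {x \<in> Oset (Suc t). fst x = X} \<le> cntc X L2" .
  qed
  have subO2: "Oset (Suc t) \<subseteq> Oset t \<union> Aset (Suc t) \<union> (if Bev (Suc t) then {(r, l)} else {})"
  proof
    fix x assume "x \<in> Oset (Suc t)"
    then have "x \<in> {x \<in> Oset (Suc t). fst x = fst x}" by simp
    then have "x \<in> {x \<in> Oset t. fst x = fst x} \<union> {x \<in> Aset (Suc t). fst x = fst x}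
      \<union> (if Bev (Suc t) \<and> r = fst x then {(r, l)} else {})" using subO[of "fst x"] by blast
    then show "x \<in> Oset t \<union> Aset (Suc t) \<union> (if Bev (Suc t) then {(r, l)} else {})"
      by (auto split: if_splits)
  qed
  have lenL2: "card (Oset (Suc t)) \<le> length L2"
  proof -
    have "card (Oset (Suc t)) \<le> card (Oset t \<union> Aset (Suc t) \<union> (if Bev (Suc t) then {(r, l)} else {}))"
      by (rule card_mono[OF _ subO2]) auto
    also have "\<dots> \<le> card (Oset t) + card (Aset (Suc t)) + card (if Bev (Suc t) then {(r, l)} else {})"
      by (meson add_le_mono card_Un_le le_trans order_refl)
    also have "\<dots> \<le> length L2" using L4 R(3) len1 by (auto simp: L2_def)
    finally show ?thesis .
  qed
  have sndL2: "\<forall>r\<in>set L2. snd r \<le> fcrs_d n s" using L2 R(2) cvd by (auto simp: L2_def L1'_def)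
  have bs: "Bset (Suc t) = Bset t \<union> (if Bev (Suc t) then {Suc t} else {})"
    by (auto simp: Bset_def le_Suc_eq)
  have bsum: "(\<Sum>t'\<in>Bset (Suc t). real (fcrs_d n s - cval t') * \<beta>)
      = (\<Sum>t'\<in>Bset t. real (fcrs_d n s - cval t') * \<beta>) + (if Bev (Suc t) then real (fcrs_d n s - cv) * \<beta> else 0)"
  proof (cases "Bev (Suc t)")
    case True
    have "Suc t \<notin> Bset t" by (simp add: Bset_def)
    then show ?thesis using True bs by (simp add: cv_def Bset_def)
  qed (simp add: bs)
  have valL2: "val L2 \<le> \<alpha> * real (\<Sum>t'\<le>Suc t. card (Aset t')) + (\<Sum>t'\<in>Bset (Suc t). real (fcrs_d n s - cval t') * \<beta>)"
  proof -
    have "val L2 = val L1' + val R" by (simp add: L2_def)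
    also have "\<dots> \<le> val L + (if Bev (Suc t) then real (fcrs_d n s - cv) * \<beta> else 0) + \<alpha> * real (card (Aset (Suc t)))"
      using val1 sum_list_R[OF R(2) b0, of \<alpha> "fcrs_d n s"] R(3) by (simp add: add_mono)
    also have "\<dots> \<le> \<alpha> * real (\<Sum>t'\<le>Suc t. card (Aset t')) + (\<Sum>t'\<in>Bset (Suc t). real (fcrs_d n s - cval t') * \<beta>)"
      using L5 bsum by (simp add: algebra_simps)
    finally show ?thesis .
  qed
  have V2: "validL L2" using R(1) by (simp add: L2_def)
  show ?case using V2 sndL2 cntL2 lenL2 valL2 by (intro exI[of _ L2] conjI) simp_all
qed

lemma wn_servers: "1 \<le> t \<Longrightarrow> t \<le> length fs \<Longrightarrow> wn t \<in> servers n s \<and> 1 \<le> hc t \<and> hc t \<le> s \<and> hc t \<noteq> fst (wn t)"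
proof -
  assume t: "1 \<le> t" "t \<le> length fs"
  obtain r l i where ev: "fs ! (t - 1) = (r, l, i)" by (metis prod.exhaust)
  have "t - 1 < length fs" using t by simp
  from ev_valid[OF this ev] show ?thesis using ev by (simp add: wn_def hc_def)
qed

lemma cap_helper:
  assumes t: "1 \<le> t" "t \<le> length fs" and y: "y \<in> clus (fcrs_d n s) (hc t)"
  shows "ifg_cap n s fs \<alpha> \<beta> K tc (Out y (t - 1)) (In (wn t) t) = ennreal \<beta>"
proof -
  obtain r l i where ev: "fs ! (t - 1) = (r, l, i)" by (metis prod.exhaust)
  have tl: "t - 1 < length fs" using t by simp
  from ev_valid[OF tl ev] have v: "(r, l) \<in> servers n s" "1 \<le> i" "i \<le> s" "i \<noteq> r" by auto
  have w: "wn t = (r, l)" and h: "hc t = i" using ev by (auto simp: wn_def hc_def)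
  have ys: "y \<in> servers n s" "fst y = i" using y h clus_servers[OF v(2) v(3), of n] by auto
  show ?thesis using t ys v w ev by simp
qed

lemma inc_B:
  assumes t: "1 \<le> t" "t \<le> length fs"
  shows "ennreal (real (fcrs_d n s - cval t) * \<beta>) \<le> (\<Sum>u\<in>S. ifg_cap n s fs \<alpha> \<beta> K tc u (In (wn t) t))"
proof -
  let ?C = "clus (fcrs_d n s) (hc t)"
  define Y where "Y = {y \<in> ?C. Out y (t - 1) \<in> S}"
  define Y' where "Y' = {y \<in> ?C. Out y (t - 1) \<notin> S}"
  have cY: "card Y + card Y' = fcrs_d n s"
  proof -
    have "?C = Y \<union> Y'" "Y \<inter> Y' = {}" by (auto simp: Y_def Y'_def)
    then have "card ?C = card Y + card Y'" by (metis card_Un_disjoint finite_clus finite_subset sup_ge1 sup_ge2)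
    then show ?thesis by simp
  qed
  have cv: "cval t = card Y'" by (simp add: cval_def Y'_def)
  have inj: "inj_on (\<lambda>y. Out y (t - 1)) Y" by (auto simp: inj_on_def)
  have sub: "(\<lambda>y. Out y (t - 1)) ` Y \<subseteq> S" by (auto simp: Y_def)
  have "(\<Sum>u\<in>(\<lambda>y. Out y (t - 1)) ` Y. ifg_cap n s fs \<alpha> \<beta> K tc u (In (wn t) t))
      \<le> (\<Sum>u\<in>S. ifg_cap n s fs \<alpha> \<beta> K tc u (In (wn t) t))"
    by (rule sum_mono2[OF finS sub]) simp
  moreover have "(\<Sum>u\<in>(\<lambda>y. Out y (t - 1)) ` Y. ifg_cap n s fs \<alpha> \<beta> K tc u (In (wn t) t))
      = (\<Sum>y\<in>Y. ifg_cap n s fs \<alpha> \<beta> K tc (Out y (t - 1)) (In (wn t) t))"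
    using sum.reindex[OF inj, of "\<lambda>u. ifg_cap n s fs \<alpha> \<beta> K tc u (In (wn t) t)"] by (simp only: o_def)
  moreover have "\<dots> = (\<Sum>y\<in>Y. ennreal \<beta>)"
  proof (rule sum.cong)
    fix y assume "y \<in> Y"
    then have "y \<in> ?C" by (simp add: Y_def)
    then show "ifg_cap n s fs \<alpha> \<beta> K tc (Out y (t - 1)) (In (wn t) t) = ennreal \<beta>"
      by (rule cap_helper[OF t])
  qed simp
  moreover have "\<dots> = ennreal (real (card Y) * \<beta>)"
    using b0 by (simp add: ennreal_mult ennreal_of_nat_eq_real_of_nat)
  moreover have "card Y = fcrs_d n s - cval t" using cY cv by simp
  ultimately show ?thesis by simp
qed

lemma cut_lb:
  "ennreal (\<alpha> * real (\<Sum>t'\<le>tc. card (Aset t')) + (\<Sum>t'\<in>Bset tc. real (fcrs_d n s - cval t') * \<beta>))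
     \<le> cut_value n s fs \<alpha> \<beta> K tc S"
proof -
  let ?V = "ifg_nodes n s fs"
  let ?c = "ifg_cap n s fs \<alpha> \<beta> K tc"
  define inc where "inc = (\<lambda>v. \<Sum>u\<in>S. ?c u v)"
  have swap: "cut_value n s fs \<alpha> \<beta> K tc S = (\<Sum>v\<in>?V - S. inc v)"
    unfolding cut_value_def inc_def by (rule sum.swap)
  define Sig where "Sig = (SIGMA t:{..tc}. Aset t)"
  define FA where "FA = (\<lambda>(t, x). Out x t) ` Sig"
  define FB where "FB = (\<lambda>t. In (wn t) t) ` Bset tc"
  have finSig: "finite Sig" by (simp add: Sig_def)
  have finB: "finite (Bset tc)" by (simp add: Bset_def)
  have FAsub: "FA \<subseteq> ?V - S"
  proof
    fix v assume "v \<in> FA"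
    then obtain t x where v: "v = Out x t" "t \<le> tc" "x \<in> Aset t" by (auto simp: FA_def Sig_def)
    then show "v \<in> ?V - S" using Out_node[of x n s t fs] tcl by (auto simp: Aset_def)
  qed
  have FBsub: "FB \<subseteq> ?V - S"
  proof
    fix v assume "v \<in> FB"
    then obtain t where v: "v = In (wn t) t" "1 \<le> t" "t \<le> tc" "Bev t" by (auto simp: FB_def Bset_def)
    then show "v \<in> ?V - S" using In_node[of "wn t" n s t fs] wn_servers[of t] tcl by (auto simp: Bev_def)
  qed
  have disj: "FA \<inter> FB = {}" by (auto simp: FA_def FB_def)
  have finVS: "finite (?V - S)" by simp
  have U1: "(\<Sum>v\<in>FA \<union> FB. inc v) \<le> (\<Sum>v\<in>?V - S. inc v)"
    by (rule sum_mono2[OF finVS]) (use FAsub FBsub in auto)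
  have U2: "(\<Sum>v\<in>FA \<union> FB. inc v) = (\<Sum>v\<in>FA. inc v) + (\<Sum>v\<in>FB. inc v)"
    by (rule sum.union_disjoint) (auto simp: FA_def FB_def finSig finB disj)
  have A: "ennreal (\<alpha> * real (\<Sum>t'\<le>tc. card (Aset t'))) \<le> (\<Sum>v\<in>FA. inc v)"
  proof -
    have inj: "inj_on (\<lambda>(t, x). Out x t) Sig" by (auto simp: inj_on_def)
    have "(\<Sum>v\<in>FA. inc v) = (\<Sum>p\<in>Sig. inc (Out (snd p) (fst p)))"
      unfolding FA_def by (subst sum.reindex[OF inj]) (auto simp: case_prod_beta)
    moreover have "(\<Sum>p\<in>Sig. ennreal \<alpha>) \<le> (\<Sum>p\<in>Sig. inc (Out (snd p) (fst p)))"
    proof (rule sum_mono)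
      fix p assume p: "p \<in> Sig"
      then have pa: "snd p \<in> Aset (fst p)" "fst p \<le> tc" by (auto simp: Sig_def)
      then have mem: "In (snd p) (fst p) \<in> S" "snd p \<in> servers n s" by (auto simp: Aset_def)
      have "?c (In (snd p) (fst p)) (Out (snd p) (fst p)) = ennreal \<alpha>"
        using mem pa tcl by simp
      moreover have "?c (In (snd p) (fst p)) (Out (snd p) (fst p)) \<le> inc (Out (snd p) (fst p))"
        unfolding inc_def by (rule member_le_sum[OF mem(1)]) (auto simp: finS)
      ultimately show "ennreal \<alpha> \<le> inc (Out (snd p) (fst p))" by simp
    qed
    moreover have "(\<Sum>p\<in>Sig. ennreal \<alpha>) = ennreal (\<alpha> * real (card Sig))"
      using a0 by (simp add: ennreal_mult ennreal_of_nat_eq_real_of_nat mult.commute)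
    moreover have "card Sig = (\<Sum>t'\<le>tc. card (Aset t'))"
      unfolding Sig_def by (simp add: card_SigmaI)
    ultimately show ?thesis by simp
  qed
  have B: "ennreal (\<Sum>t'\<in>Bset tc. real (fcrs_d n s - cval t') * \<beta>) \<le> (\<Sum>v\<in>FB. inc v)"
  proof -
    have inj: "inj_on (\<lambda>t. In (wn t) t) (Bset tc)" by (auto simp: inj_on_def)
    have "(\<Sum>v\<in>FB. inc v) = (\<Sum>t\<in>Bset tc. inc (In (wn t) t))"
      unfolding FB_def by (simp add: sum.reindex[OF inj])
    moreover have "(\<Sum>t\<in>Bset tc. ennreal (real (fcrs_d n s - cval t) * \<beta>)) \<le> (\<Sum>t\<in>Bset tc. inc (In (wn t) t))"
    proof (rule sum_mono)
      fix t assume "t \<in> Bset tc"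
      then have "1 \<le> t" "t \<le> length fs" using tcl by (auto simp: Bset_def)
      then show "ennreal (real (fcrs_d n s - cval t) * \<beta>) \<le> inc (In (wn t) t)"
        unfolding inc_def by (rule inc_B)
    qed
    moreover have "(\<Sum>t\<in>Bset tc. ennreal (real (fcrs_d n s - cval t) * \<beta>))
        = ennreal (\<Sum>t'\<in>Bset tc. real (fcrs_d n s - cval t') * \<beta>)"
      using b0 by (simp add: sum_ennreal)
    ultimately show ?thesis by simp
  qed
  have "ennreal (\<alpha> * real (\<Sum>t'\<le>tc. card (Aset t'))) + ennreal (\<Sum>t'\<in>Bset tc. real (fcrs_d n s - cval t') * \<beta>)
     \<le> cut_value n s fs \<alpha> \<beta> K tc S"
  proof -
    have "ennreal (\<alpha> * real (\<Sum>t'\<le>tc. card (Aset t'))) + ennreal (\<Sum>t'\<in>Bset tc. real (fcrs_d n s - cval t') * \<beta>)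
      \<le> (\<Sum>v\<in>FA. inc v) + (\<Sum>v\<in>FB. inc v)" by (rule add_mono[OF A B])
    also have "\<dots> = (\<Sum>v\<in>FA \<union> FB. inc v)" using U2 by simp
    also have "\<dots> \<le> (\<Sum>v\<in>?V - S. inc v)" by (rule U1)
    also have "\<dots> = cut_value n s fs \<alpha> \<beta> K tc S" using swap by simp
    finally show ?thesis .
  qed
  moreover have "ennreal (\<alpha> * real (\<Sum>t'\<le>tc. card (Aset t'))) + ennreal (\<Sum>t'\<in>Bset tc. real (fcrs_d n s - cval t') * \<beta>)
     = ennreal (\<alpha> * real (\<Sum>t'\<le>tc. card (Aset t')) + (\<Sum>t'\<in>Bset tc. real (fcrs_d n s - cval t') * \<beta>))"
    using a0 b0 by (simp add: ennreal_plus sum_nonneg)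
  ultimately show ?thesis by simp
qed

lemma M_le_cut:
  fixes M :: real and k :: nat
  assumes cK: "card K = k" and ad: "\<alpha> \<le> real (fcrs_d n s) * \<beta>"
    and hyp: "\<forall>u \<le> k div 2. M \<le> (real k - real u) * \<alpha> + real u * (real (fcrs_d n s) - real k + real u) * \<beta>"
  shows "ennreal M \<le> cut_value n s fs \<alpha> \<beta> K tc S"
proof -
  obtain L where L: "validL L \<and> (\<forall>r\<in>set L. snd r \<le> fcrs_d n s)
     \<and> (\<forall>X. card {x \<in> Oset tc. fst x = X} \<le> cntc X L) \<and> card (Oset tc) \<le> length L
     \<and> val L \<le> \<alpha> * real (\<Sum>t'\<le>tc. card (Aset t')) + (\<Sum>t'\<in>Bset tc. real (fcrs_d n s - cval t') * \<beta>)"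
    using inv[OF order_refl] by (elim exE) (rule that)
  note L1 = L[THEN conjunct1]
  note L2 = L[THEN conjunct2, THEN conjunct1]
  note L4 = L[THEN conjunct2, THEN conjunct2, THEN conjunct2, THEN conjunct1]
  note L5 = L[THEN conjunct2, THEN conjunct2, THEN conjunct2, THEN conjunct2]
  have "K \<subseteq> Oset tc" using F1 Ksub by (auto simp: Oset_def)
  then have "k \<le> card (Oset tc)" using cK card_mono[OF finite_Oset] by metis
  then have kl: "k \<le> length L" using L4 by simp
  have V': "validL (take k L)" using validL_take[OF L1] .
  have l': "length (take k L) = k" using kl by simp
  have s': "\<forall>r\<in>set (take k L). snd r \<le> fcrs_d n s" using L2 by (meson in_set_takeD)
  have "M \<le> val (take k L)" using real_bound[OF V' l' s' b0 ad hyp] .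
  also have "\<dots> \<le> val L"
  proof -
    have "val L = val (take k L) + val (drop k L)"
      by (metis append_take_drop_id map_append sum_list_append)
    moreover have "0 \<le> val (drop k L)" using a0 b0 by (intro sum_list_nonneg) auto
    ultimately show ?thesis by simp
  qed
  finally have "M \<le> \<alpha> * real (\<Sum>t'\<le>tc. card (Aset t')) + (\<Sum>t'\<in>Bset tc. real (fcrs_d n s - cval t') * \<beta>)"
    using L5 by simp
  then have "ennreal M \<le> ennreal (\<alpha> * real (\<Sum>t'\<le>tc. card (Aset t')) + (\<Sum>t'\<in>Bset tc. real (fcrs_d n s - cval t') * \<beta>))"
    by (rule ennreal_leI)
  also have "\<dots> \<le> cut_value n s fs \<alpha> \<beta> K tc S" by (rule cut_lb)
  finally show ?thesis .
qed

end



context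
  fixes n s k i :: nat and \<alpha> \<beta> :: real
  assumes s2: "2 \<le> s" and ik: "2 * i \<le> k" and kd: "k \<le> fcrs_d n s"
    and a0: "0 \<le> \<alpha>" and b0: "0 \<le> \<beta>"
begin

definition "cfs = map (\<lambda>t. (2::nat, Suc t, 1::nat)) [0..<i]"
definition "cK = ({1::nat} \<times> {1..k - i}) \<union> ({2} \<times> {1..i})"

lemma cfs_len[simp]: "length cfs = i" by (simp add: cfs_def)
lemma cfs_nth: "1 \<le> t \<Longrightarrow> t \<le> i \<Longrightarrow> cfs ! (t - 1) = (2, t, 1)"
proof -
  assume t: "1 \<le> t" "t \<le> i"
  then have "t - 1 < i" by simp
  then show ?thesis using t by (simp add: cfs_def)
qed

lemma srv1: "1 \<le> b \<Longrightarrow> b \<le> fcrs_d n s \<Longrightarrow> (1, b) \<in> servers n s"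
  using s2 by (simp add: servers_def)
lemma srv2: "1 \<le> b \<Longrightarrow> b \<le> fcrs_d n s \<Longrightarrow> (2, b) \<in> servers n s"
  using s2 by (simp add: servers_def)

lemma cfs_valid: "valid_seq n s cfs"
  unfolding valid_seq_def valid_event_def cfs_def
  using s2 ik kd by (auto simp: servers_def)

lemma cK_sub: "cK \<subseteq> servers n s"
  using ik kd s2 by (auto simp: cK_def servers_def)

lemma cK_card: "card cK = k"
proof -
  have "card cK = card ({1::nat} \<times> {1..k - i}) + card ({2::nat} \<times> {1..i})"
    unfolding cK_def by (rule card_Un_disjoint) auto
  then show ?thesis using ik by (simp add: card_cartesian_product)
qed

fun bad :: "ifg_node \<Rightarrow> bool" where
  "bad DC = True"
| "bad Src = False"
| "bad (Out (a, b) t) = ((a = 1 \<and> 1 \<le> b \<and> b \<le> k - i) \<or> (a = 2 \<and> 1 \<le> b \<and> b \<le> t))"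
| "bad (In (a, b) t) = ((a = 1 \<and> 1 \<le> b \<and> b \<le> k - i \<and> 1 \<le> t) \<or> (a = 2 \<and> 1 \<le> b \<and> b \<le> t))"

definition "E1 = (\<lambda>b. (In (1, b) 0, Out (1, b) 0)) ` {1..k - i}"
definition "E2 = (\<lambda>(m, j). (Out (1, m) (j - 1), In (2, j) j)) ` ({k - i + 1..fcrs_d n s} \<times> {1..i})"

lemma cross:
  assumes "u \<in> ifg_nodes n s cfs" "\<not> bad u" "v \<in> ifg_nodes n s cfs" "bad v"
    and "ifg_cap n s cfs \<alpha> \<beta> cK i u v \<noteq> 0"
  shows "(u, v) \<in> E1 \<union> E2"
proof (cases u)
  case Src
  then show ?thesis using assms
    by (cases v) (auto simp: servers_def)
next
  case DC
  then show ?thesis using assms by (cases v) auto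
next
  case (In x t)
  obtain a b where x: "x = (a, b)" by (cases x)
  show ?thesis
  proof (cases v)
    case (Out y t')
    then have eq: "y = x" "t' = t" using assms In by (auto split: if_splits)
    show ?thesis
    proof (cases "a = 1 \<and> 1 \<le> b \<and> b \<le> k - i")
      case True
      then have "t = 0" using assms(2) In x by auto
      then show ?thesis using True In Out eq x by (auto simp: E1_def)
    next
      case False
      then show ?thesis using assms(2) assms(4) In Out eq x by auto
    qed
  qed (use assms In in auto)
next
  case (Out y t')
  obtain a b where y: "y = (a, b)" by (cases y)
  show ?thesis
  proof (cases v)
    case DC
    then have "y \<in> cK" "t' = i" using assms Out by (auto split: if_splits)
    then have "bad u" using Out y by (auto simp: cK_def)
    then show ?thesis using assms(2) by simp
  next
    case (In x t)
    obtain c e where x: "x = (c, e)" by (cases x)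
    have c1: "x \<in> servers n s" "y \<in> servers n s" "1 \<le> t" "t \<le> i" "t' = t - 1"
      using assms(5) Out In by (auto split: if_splits)
    have ev: "cfs ! (t - 1) = (2, t, 1)" using cfs_nth c1 by simp
    show ?thesis
    proof (cases "x = (2, t)")
      case True
      then have "fst y = 1" using assms(5) Out In c1 ev by (auto split: if_splits)
      then have a1: "a = 1" using y by simp
      have "b \<le> fcrs_d n s" "1 \<le> b" using c1(2) y a1 s2 by (auto simp: servers_def)
      moreover have "\<not> b \<le> k - i" using assms(2) Out y a1 \<open>1 \<le> b\<close> by auto
      ultimately have "(b, t) \<in> {k - i + 1..fcrs_d n s} \<times> {1..i}" using c1 by auto
      then show ?thesis using Out In y a1 True c1 by (force simp: E2_def)
    next
      case False
      then have "y = x" using assms(5) Out In c1 ev by (auto split: if_splits)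
      then show ?thesis using assms(2) assms(4) Out In x y False c1 by auto
    qed
  qed (use assms Out in auto)
qed

lemma cut_ub:
  "min_cut n s cfs \<alpha> \<beta> cK i \<le> ennreal (real (k - i) * \<alpha> + real ((fcrs_d n s - (k - i)) * i) * \<beta>)"
proof -
  let ?V = "ifg_nodes n s cfs"
  let ?c = "ifg_cap n s cfs \<alpha> \<beta> cK i"
  define S0 where "S0 = {v \<in> ?V. \<not> bad v}"
  have S0mem: "S0 \<in> {S. S \<subseteq> ?V \<and> Src \<in> S \<and> DC \<notin> S}"
    by (auto simp: S0_def ifg_nodes_def)
  have mc: "min_cut n s cfs \<alpha> \<beta> cK i \<le> cut_value n s cfs \<alpha> \<beta> cK i S0"
    unfolding min_cut_def by (rule INF_lower[OF S0mem])
  define A where "A = S0 \<times> (?V - S0)"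
  define f where "f = (\<lambda>p. ?c (fst p) (snd p))"
  have finA: "finite A" by (simp add: A_def S0_def)
  have cv: "cut_value n s cfs \<alpha> \<beta> cK i S0 = (\<Sum>p\<in>A. f p)"
    unfolding cut_value_def A_def f_def by (simp add: sum.cartesian_product case_prod_beta)
  have finE: "finite (E1 \<union> E2)" by (simp add: E1_def E2_def)
  have z: "\<forall>p\<in>A - A \<inter> (E1 \<union> E2). f p = 0"
  proof
    fix p assume p: "p \<in> A - A \<inter> (E1 \<union> E2)"
    obtain u v where uv: "p = (u, v)" by (cases p)
    have "u \<in> ?V" "\<not> bad u" "v \<in> ?V" "bad v" using p uv by (auto simp: A_def S0_def)
    then show "f p = 0" using cross[of u v] p uv by (auto simp: f_def)
  qed
  have "(\<Sum>p\<in>A. f p) = (\<Sum>p\<in>A \<inter> (E1 \<union> E2). f p)"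
    by (rule sum.mono_neutral_right[OF finA _ z]) auto
  also have "\<dots> \<le> (\<Sum>p\<in>E1 \<union> E2. f p)"
    by (rule sum_mono2[OF finE]) auto
  also have "\<dots> = (\<Sum>p\<in>E1. f p) + (\<Sum>p\<in>E2. f p)"
    by (rule sum.union_disjoint) (auto simp: E1_def E2_def)
  also have "(\<Sum>p\<in>E1. f p) = ennreal (real (k - i) * \<alpha>)"
  proof -
    have inj: "inj_on (\<lambda>b. (In (1, b) 0, Out (1, b) 0)) {1..k - i}" by (auto simp: inj_on_def)
    have "(\<Sum>p\<in>E1. f p) = (\<Sum>b\<in>{1..k - i}. ?c (In (1, b) 0) (Out (1, b) 0))"
      unfolding E1_def using sum.reindex[OF inj, of f] by (simp add: f_def o_def)
    also have "\<dots> = (\<Sum>b\<in>{1..k - i}. ennreal \<alpha>)"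
    proof (rule sum.cong)
      fix b assume "b \<in> {1..k - i}"
      then have "(1, b) \<in> servers n s" using kd by (intro srv1) auto
      then show "?c (In (1, b) 0) (Out (1, b) 0) = ennreal \<alpha>" by simp
    qed simp
    also have "\<dots> = ennreal (real (k - i) * \<alpha>)"
      using a0 by (simp add: ennreal_mult ennreal_of_nat_eq_real_of_nat)
    finally show ?thesis .
  qed
  also have "(\<Sum>p\<in>E2. f p) = ennreal (real ((fcrs_d n s - (k - i)) * i) * \<beta>)"
  proof -
    let ?I = "{k - i + 1..fcrs_d n s} \<times> {1..i}"
    have inj: "inj_on (\<lambda>(m, j). (Out (1, m) (j - 1), In (2::nat, j) j)) ?I" by (auto simp: inj_on_def)
    have "(\<Sum>p\<in>E2. f p) = (\<Sum>q\<in>?I. ?c (Out (1, fst q) (snd q - 1)) (In (2, snd q) (snd q)))"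
      unfolding E2_def using sum.reindex[OF inj, of f] by (simp add: f_def o_def case_prod_beta)
    also have "\<dots> = (\<Sum>q\<in>?I. ennreal \<beta>)"
    proof (rule sum.cong)
      fix q assume q: "q \<in> ?I"
      obtain m j where mj: "q = (m, j)" by (cases q)
      have r: "1 \<le> m" "m \<le> fcrs_d n s" "1 \<le> j" "j \<le> i" using q mj by auto
      have s1: "(1, m) \<in> servers n s" using r by (intro srv1) auto
      have s2': "(2, j) \<in> servers n s" using r ik kd by (intro srv2) auto
      have ev: "cfs ! (j - 1) = (2, j, 1)" using cfs_nth r by simp
      show "?c (Out (1, fst q) (snd q - 1)) (In (2, snd q) (snd q)) = ennreal \<beta>"
        using s1 s2' ev r mj by simp
    qed simp
    also have "\<dots> = ennreal (real (card ?I) * \<beta>)"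
      using b0 by (simp add: ennreal_mult ennreal_of_nat_eq_real_of_nat)
    also have "card ?I = (fcrs_d n s - (k - i)) * i"
      by (simp add: card_cartesian_product)
    finally show ?thesis .
  qed
  also have "ennreal (real (k - i) * \<alpha>) + ennreal (real ((fcrs_d n s - (k - i)) * i) * \<beta>)
      = ennreal (real (k - i) * \<alpha> + real ((fcrs_d n s - (k - i)) * i) * \<beta>)"
    using a0 b0 by (simp add: ennreal_plus)
  finally show ?thesis using mc cv by simp
qed

lemma infeasible:
  fixes M :: real
  assumes "fcrs_feasible n k s M \<alpha> \<beta>"
  shows "M \<le> real (k - i) * \<alpha> + real ((fcrs_d n s - (k - i)) * i) * \<beta>"
proof -
  have "ennreal M \<le> min_cut n s cfs \<alpha> \<beta> cK i"
    using assms cfs_valid cK_sub cK_card unfolding fcrs_feasible_def by simp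
  also have "\<dots> \<le> ennreal (real (k - i) * \<alpha> + real ((fcrs_d n s - (k - i)) * i) * \<beta>)" by (rule cut_ub)
  finally have le: "ennreal M \<le> ennreal (real (k - i) * \<alpha> + real ((fcrs_d n s - (k - i)) * i) * \<beta>)" .
  have X0: "0 \<le> real (k - i) * \<alpha> + real ((fcrs_d n s - (k - i)) * i) * \<beta>" using a0 b0 by simp
  show ?thesis using ennreal_le_iff[OF X0] le by blast
qed

end



lemma h_step: "(K - real (Suc u)) * a + real (Suc u) * (D - K + real (Suc u)) * b
   = (K - real u) * a + real u * (D - K + real u) * b + (- a + (D - K + 2 * real u + 1) * b)"
  by (simp add: algebra_simps)

lemma numeric:
  fixes k d i0 :: nat and M \<gamma> :: real
  assumes dd: "fcrs_d n s = d" and k1: "1 \<le> k" and dk: "k \<le> d" and M0: "0 < M"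
    and i0: "i0 \<le> k div 2"
    and low: "fcrs_f n k s M i0 \<le> \<gamma>"
    and up: "1 \<le> i0 \<Longrightarrow> \<gamma> < fcrs_f n k s M (i0 - 1)"
  defines "\<beta> \<equiv> \<gamma> / real d"
  defines "\<alpha> \<equiv> (M - real i0 * (real d - real k + real i0) * \<beta>) / (real k - real i0)"
  shows "0 \<le> \<beta>" "\<alpha> \<le> real d * \<beta>" "0 \<le> \<alpha>"
    "\<forall>u \<le> k div 2. M \<le> (real k - real u) * \<alpha> + real u * (real d - real k + real u) * \<beta>"
proof -
  let ?D = "real d" and ?K = "real k" and ?j = "real i0"
  have D0: "?D > 0" using dk k1 by simp
  have DK: "?K \<le> ?D" using dk by simp
  have ik: "i0 < k" using i0 k1 by linarith
  have Kj: "?K - ?j > 0" using ik by simp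
  have E1: "(?K - ?j) * \<alpha> = M - ?j * (?D - ?K + ?j) * \<beta>"
    using Kj by (simp add: \<alpha>_def)
  define den0 where "den0 = (\<lambda>i::nat. (2 * ?K - real i - 1) * real i + ?K * (?D - ?K + 1))"
  have den0pos: "\<And>i. i < k div 2 \<Longrightarrow> den0 i > 0"
  proof -
    fix i :: nat assume "i < k div 2"
    then have "2 * ?K - real i - 1 \<ge> 0" by linarith
    moreover have "?K * (?D - ?K + 1) > 0" using DK k1 by simp
    ultimately show "den0 i > 0" unfolding den0_def by (smt (verit) mult_nonneg_nonneg of_nat_0_le_iff)
  qed
  have fden0: "\<And>i. i < k div 2 \<Longrightarrow> fcrs_f n k s M i = M * ?D / den0 i"
    by (simp add: fcrs_f_def dd den0_def Let_def)
  have cdiv: "real ((k + 1) div 2) = ?K - real (k div 2)"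
  proof -
    have "(k + 1) div 2 = k - k div 2" by linarith
    then show ?thesis by (simp add: of_nat_diff)
  qed
  define den1 where "den1 = ?K * ?D - real (k div 2) * (?K - real (k div 2))"
  have den1pos: "den1 > 0"
  proof -
    have a: "real (k div 2) * (?K - real (k div 2)) \<le> real (k div 2) * ?K"
      by (simp add: mult_left_mono)
    have "real (k div 2) < ?K" using k1 by linarith
    then have "real (k div 2) * ?K < ?K * ?K" using k1 by simp
    also have "\<dots> \<le> ?K * ?D" using DK k1 by (simp add: mult_left_mono)
    finally show ?thesis using a unfolding den1_def by linarith
  qed
  have fden1: "fcrs_f n k s M (k div 2) = M * ?D / den1"
    using cdiv by (simp add: fcrs_f_def dd den1_def Let_def)
  have g0: "\<gamma> > 0"
  proof -
    have "fcrs_f n k s M i0 > 0"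
    proof (cases "i0 < k div 2")
      case True then show ?thesis using fden0 den0pos M0 D0 by simp
    next
      case False then have "i0 = k div 2" using i0 by simp
      then show ?thesis using fden1 den1pos M0 D0 by simp
    qed
    then show ?thesis using low by simp
  qed
  show b0: "0 \<le> \<beta>" using g0 D0 by (simp add: \<beta>_def)
  have gb: "\<gamma> = ?D * \<beta>" using D0 by (simp add: \<beta>_def)
  have E2: "i0 < k div 2 \<Longrightarrow> \<alpha> \<le> (?D - ?K + 2 * ?j + 1) * \<beta>"
  proof -
    assume a: "i0 < k div 2"
    have "M * ?D / den0 i0 \<le> ?D * \<beta>" using low fden0[OF a] gb by simp
    then have "M * ?D \<le> ?D * \<beta> * den0 i0" using den0pos[OF a] by (simp add: pos_divide_le_eq)
    then have "M \<le> \<beta> * den0 i0" using D0 by (simp add: mult.assoc mult.left_commute[of ?D])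
    then have "M - ?j * (?D - ?K + ?j) * \<beta> \<le> (?K - ?j) * ((?D - ?K + 2 * ?j + 1) * \<beta>)"
      unfolding den0_def by (simp add: algebra_simps)
    then have "(?K - ?j) * \<alpha> \<le> (?K - ?j) * ((?D - ?K + 2 * ?j + 1) * \<beta>)" using E1 by simp
    then show ?thesis using Kj by simp
  qed
  have E3: "1 \<le> i0 \<Longrightarrow> (?D - ?K + 2 * ?j - 1) * \<beta> \<le> \<alpha>"
  proof -
    assume a: "1 \<le> i0"
    have a2: "i0 - 1 < k div 2" using a i0 by linarith
    have "?D * \<beta> < M * ?D / den0 (i0 - 1)" using up[OF a] fden0[OF a2] gb by simp
    then have "?D * \<beta> * den0 (i0 - 1) < M * ?D" using den0pos[OF a2] by (simp add: pos_less_divide_eq)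
    then have "\<beta> * den0 (i0 - 1) < M" using D0 by (simp add: mult.assoc mult.left_commute[of ?D])
    moreover have "real (i0 - 1) = ?j - 1" using a by simp
    ultimately have "(?K - ?j) * ((?D - ?K + 2 * ?j - 1) * \<beta>) \<le> M - ?j * (?D - ?K + ?j) * \<beta>"
      unfolding den0_def by (simp add: algebra_simps)
    then have "(?K - ?j) * ((?D - ?K + 2 * ?j - 1) * \<beta>) \<le> (?K - ?j) * \<alpha>" using E1 by simp
    then show ?thesis using Kj by simp
  qed
  show "\<alpha> \<le> ?D * \<beta>"
  proof (cases "i0 < k div 2")
    case True
    have "(?D - ?K + 2 * ?j + 1) \<le> ?D" using True by linarith
    then show ?thesis using E2[OF True] b0 by (meson mult_right_mono order_trans)
  next
    case False
    then have ie: "i0 = k div 2" using i0 by simp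
    have "M * ?D / den1 \<le> ?D * \<beta>" using low fden1 gb ie by simp
    then have "M * ?D \<le> ?D * \<beta> * den1" using den1pos by (simp add: pos_divide_le_eq)
    then have "M \<le> \<beta> * den1" using D0 by (simp add: mult.assoc mult.left_commute[of ?D])
    then have "M - ?j * (?D - ?K + ?j) * \<beta> \<le> (?K - ?j) * (?D * \<beta>)"
      unfolding den1_def ie by (simp add: algebra_simps)
    then have "(?K - ?j) * \<alpha> \<le> (?K - ?j) * (?D * \<beta>)" using E1 by simp
    then show ?thesis using Kj by simp
  qed
  define h where "h = (\<lambda>u::nat. (?K - real u) * \<alpha> + real u * (?D - ?K + real u) * \<beta>)"
  have hi0: "h i0 = M" unfolding h_def using E1 by (simp add: algebra_simps)
  have hup: "\<And>m. i0 + m \<le> k div 2 \<Longrightarrow> M \<le> h (i0 + m)"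
  proof -
    fix m show "i0 + m \<le> k div 2 \<Longrightarrow> M \<le> h (i0 + m)"
    proof (induction m)
      case 0 then show ?case using hi0 by simp
    next
      case (Suc m)
      have lt: "i0 < k div 2" using Suc.prems by simp
      have "(?D - ?K + 2 * ?j + 1) * \<beta> \<le> (?D - ?K + 2 * real (i0 + m) + 1) * \<beta>"
        using b0 by (intro mult_right_mono) auto
      then have "0 \<le> - \<alpha> + (?D - ?K + 2 * real (i0 + m) + 1) * \<beta>" using E2[OF lt] by linarith
      moreover have "h (Suc (i0 + m)) = h (i0 + m) + (- \<alpha> + (?D - ?K + 2 * real (i0 + m) + 1) * \<beta>)"
        unfolding h_def by (rule h_step)
      ultimately show ?case using Suc by simp
    qed
  qed
  have hdown: "\<And>m. m \<le> i0 \<Longrightarrow> M \<le> h (i0 - m)"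
  proof -
    fix m show "m \<le> i0 \<Longrightarrow> M \<le> h (i0 - m)"
    proof (induction m)
      case 0 then show ?case using hi0 by simp
    next
      case (Suc m)
      have a: "1 \<le> i0" using Suc.prems by simp
      define u where "u = i0 - Suc m"
      have su: "Suc u = i0 - m" using Suc.prems unfolding u_def by simp
      have "(?D - ?K + 2 * real u + 1) * \<beta> \<le> (?D - ?K + 2 * ?j - 1) * \<beta>"
        using b0 su by (intro mult_right_mono) auto
      then have "- \<alpha> + (?D - ?K + 2 * real u + 1) * \<beta> \<le> 0" using E3[OF a] by linarith
      moreover have "h (Suc u) = h u + (- \<alpha> + (?D - ?K + 2 * real u + 1) * \<beta>)"
        unfolding h_def by (rule h_step)
      ultimately have "h (Suc u) \<le> h u" by linarith
      then show ?case using Suc su u_def by simp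
    qed
  qed
  show "\<forall>u \<le> k div 2. M \<le> (?K - real u) * \<alpha> + real u * (?D - ?K + real u) * \<beta>"
  proof (intro allI impI)
    fix u assume u: "u \<le> k div 2"
    show "M \<le> (?K - real u) * \<alpha> + real u * (?D - ?K + real u) * \<beta>"
    proof (cases "i0 \<le> u")
      case True
      then show ?thesis using hup[of "u - i0"] u by (simp add: h_def)
    next
      case False
      then show ?thesis using hdown[of "i0 - u"] by (simp add: h_def)
    qed
  qed
  have "M \<le> h i0" using hi0 by simp
  show "0 \<le> \<alpha>"
  proof (cases "i0 = 0")
    case True then show ?thesis using M0 k1 by (simp add: \<alpha>_def)
  next
    case False
    then have "(?D - ?K + 2 * ?j - 1) * \<beta> \<le> \<alpha>" using E3 by simp
    moreover have "0 \<le> (?D - ?K + 2 * ?j - 1) * \<beta>" using b0 DK False by simp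
    ultimately show ?thesis by linarith
  qed
qed




lemma main_i0:
  fixes n k s i0 :: nat and M \<gamma> :: real
  assumes s2: "2 \<le> s" and sk: "s \<le> n div k" and k0: "0 < k" and M0: "0 < M"
    and i0: "i0 \<le> k div 2"
    and low: "fcrs_f n k s M i0 \<le> \<gamma>"
    and up: "1 \<le> i0 \<Longrightarrow> \<gamma> < fcrs_f n k s M (i0 - 1)"
  shows "is_smallest {\<alpha>. 0 \<le> \<alpha> \<and> fcrs_feasible n k s M \<alpha> (\<gamma> / real (fcrs_d n s))}
           ((M - real i0 / real (fcrs_d n s) * (real (fcrs_d n s) - real k + real i0) * \<gamma>)
              / (real k - real i0))"
proof -
  define d where "d = fcrs_d n s"
  have "s * k \<le> n" using sk k0 less_eq_div_iff_mult_less_eq by blast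
  then have kd: "k \<le> d" unfolding d_def fcrs_d_def using s2
    by (simp add: less_eq_div_iff_mult_less_eq mult.commute)
  define \<beta> where "\<beta> = \<gamma> / real d"
  define A where "A = (M - real i0 * (real d - real k + real i0) * \<beta>) / (real k - real i0)"
  have Aeq: "(M - real i0 / real (fcrs_d n s) * (real (fcrs_d n s) - real k + real i0) * \<gamma>)
              / (real k - real i0) = A"
    unfolding A_def \<beta>_def d_def by simp
  have k1: "1 \<le> k" using k0 by simp
  note N = numeric[OF d_def[symmetric] k1 kd M0 i0 low up]
  have b0: "0 \<le> \<beta>" using N(1) by (simp add: \<beta>_def)
  have Ad: "A \<le> real d * \<beta>" using N(2) by (simp add: \<beta>_def A_def)
  have A0: "0 \<le> A" using N(3) by (simp add: \<beta>_def A_def)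
  have hyp: "\<forall>u \<le> k div 2. M \<le> (real k - real u) * A + real u * (real d - real k + real u) * \<beta>"
    using N(4) by (simp add: \<beta>_def A_def)
  have feas: "fcrs_feasible n k s M A \<beta>"
    unfolding fcrs_feasible_def
  proof (intro allI impI)
    fix fs K tc
    assume vs: "valid_seq n s fs" and tcl: "tc \<le> length fs" and Ks: "K \<subseteq> servers n s"
      and cK: "card K = k"
    show "ennreal M \<le> min_cut n s fs A \<beta> K tc"
      unfolding min_cut_def
    proof (rule INF_greatest)
      fix S assume S: "S \<in> {S. S \<subseteq> ifg_nodes n s fs \<and> Src \<in> S \<and> DC \<notin> S}"
      show "ennreal M \<le> cut_value n s fs A \<beta> K tc S"
      proof (cases "cut_value n s fs A \<beta> K tc S = top")
        case True then show ?thesis by simp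
      next
        case False
        have Ssub: "S \<subseteq> ifg_nodes n s fs" and src: "Src \<in> S" and dc: "DC \<notin> S" using S by auto
        show ?thesis
          using M_le_cut[OF vs tcl Ks Ssub src dc A0 b0 False cK] Ad hyp unfolding d_def by blast
      qed
    qed
  qed
  have mini: "\<forall>y \<in> {\<alpha>. 0 \<le> \<alpha> \<and> fcrs_feasible n k s M \<alpha> \<beta>}. A \<le> y"
  proof
    fix y assume y: "y \<in> {\<alpha>. 0 \<le> \<alpha> \<and> fcrs_feasible n k s M \<alpha> \<beta>}"
    have ik: "2 * i0 \<le> k" using i0 by linarith
    have e2: "real (k - i0) = real k - real i0" using i0 by (simp add: of_nat_diff)
    have h1: "k - i0 \<le> fcrs_d n s" using kd unfolding d_def by simp
    have h2: "real (fcrs_d n s - (k - i0)) = real (fcrs_d n s) - real (k - i0)" by (rule of_nat_diff[OF h1])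
    have e1: "real ((fcrs_d n s - (k - i0)) * i0) = real i0 * (real d - real k + real i0)"
      unfolding of_nat_mult h2 e2 d_def by (simp add: algebra_simps)
    have "M \<le> real (k - i0) * y + real ((fcrs_d n s - (k - i0)) * i0) * \<beta>"
    proof -
      have kd': "k \<le> fcrs_d n s" using kd unfolding d_def .
      have y0: "0 \<le> y" and fy: "fcrs_feasible n k s M y \<beta>" using y by auto
      show ?thesis by (rule infeasible[OF s2 ik kd' y0 b0 fy])
    qed
    then have "M \<le> (real k - real i0) * y + real i0 * (real d - real k + real i0) * \<beta>"
      unfolding e1 e2 .
    then have "M - real i0 * (real d - real k + real i0) * \<beta> \<le> (real k - real i0) * y"
      by linarith
    moreover have "real k - real i0 > 0" using i0 k0 by linarith
    ultimately show "A \<le> y" unfolding A_def by (simp add: divide_le_eq mult.commute)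
  qed
  show ?thesis unfolding Aeq is_smallest_def
    using A0 feas mini by (simp add: \<beta>_def d_def)
qed

theorem theorem1:
  fixes n k s :: nat and M \<gamma> :: real
  assumes "0 < n" "0 < k" "0 < s"
    and "2 \<le> s" "s \<le> n div k"
    and "0 < M"
    and "fcrs_f n k s M (k div 2) \<le> \<gamma>"
  shows "(fcrs_f n k s M 0 \<le> \<gamma> \<longrightarrow>
           is_smallest {\<alpha>. 0 \<le> \<alpha> \<and> fcrs_feasible n k s M \<alpha> (\<gamma> / real (fcrs_d n s))}
                   (M / real k))
       \<and> (\<forall>i \<in> {1..k div 2}. fcrs_f n k s M i \<le> \<gamma> \<and> \<gamma> < fcrs_f n k s M (i - 1) \<longrightarrow>
           is_smallest {\<alpha>. 0 \<le> \<alpha> \<and> fcrs_feasible n k s M \<alpha> (\<gamma> / real (fcrs_d n s))}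
                   ((M - real i / real (fcrs_d n s) * (real (fcrs_d n s) - real k + real i) * \<gamma>)
                      / (real k - real i)))"
proof (intro conjI impI ballI)
  assume "fcrs_f n k s M 0 \<le> \<gamma>"
  then show "is_smallest {\<alpha>. 0 \<le> \<alpha> \<and> fcrs_feasible n k s M \<alpha> (\<gamma> / real (fcrs_d n s))} (M / real k)"
    using main_i0[OF assms(4) assms(5) assms(2) assms(6), of 0 \<gamma>] by simp
next
  fix i assume i: "i \<in> {1..k div 2}" and g: "fcrs_f n k s M i \<le> \<gamma> \<and> \<gamma> < fcrs_f n k s M (i - 1)"
  show "is_smallest {\<alpha>. 0 \<le> \<alpha> \<and> fcrs_feasible n k s M \<alpha> (\<gamma> / real (fcrs_d n s))}
                   ((M - real i / real (fcrs_d n s) * (real (fcrs_d n s) - real k + real i) * \<gamma>)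
                      / (real k - real i))"
    using main_i0[OF assms(4) assms(5) assms(2) assms(6), of i \<gamma>] i g by simp
qed


end
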